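(* Consider the multicast coalitional game with player set $\mathcal{N}=\{1,\ldots,N\}$, $N\ge2$, and value function $$v(S)=\sum_{i\in S}U_i-\sum_{i\in S}\frac{\alpha_i}{R_S}-\frac{\beta+\gamma}{R_S},\qquad R_S=\min_{i\in S}R_i,$$ for nonempty $S\subseteq\mathcal{N}$. Suppose $P_{Rx,i}=P_{Rx}$ for all $i$, so that $\alpha_i=\alpha:=aP_{Rx}X$ for all $i$. Let $R_k=\min_iR_i$ and $R_m=\max_iR_i$, and write $R_m=\mu R_k$ with $\mu\ge1$. If $$\mu>1+\frac{\beta+\gamma}{\alpha},$$ then the core is empty.
   Context: A transmitter multicasts a file of size $X>0$ bits to users $\mathcal{N}=\{1,\dots,N\}$. User $i$ has valuation $U_i\in\mathbb{R}$, downloads at rate $R_i>0$, and consumes receive power $P_{Rx,i}>0$; the transmitter transmits at power $P_{Tx}>0$. Costs per unit energy are $a>0$ at users and $b>0$ at the transmitter; bandwidth cost per second is $w>0$. Set $\alpha_i=aP_{Rx,i}X$, $\beta=bP_{Tx}X$, $\gamma=wX$. The core is the set of payoff vectors $(x_1,\dots,x_N)\in\mathbb{R}^N$ with $\sum_{i\in\mathcal{N}}x_i=v(\mathcal{N})$ and $\sum_{i\in S}x_i\ge v(S)$ for every nonempty $S\subseteq\mathcal{N}$. *)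

theory Defs
  imports Main "HOL.Real"
begin

definition coalition_rate :: "(nat \<Rightarrow> real) \<Rightarrow> nat set \<Rightarrow> real" where
  "coalition_rate R S = Min (R ` S)"

definition mc_value ::
  "(nat \<Rightarrow> real) \<Rightarrow> (nat \<Rightarrow> real) \<Rightarrow> real \<Rightarrow> real \<Rightarrow> (nat \<Rightarrow> real) \<Rightarrow> nat set \<Rightarrow> real" where
  "mc_value U alpha beta gamma R S =
     (\<Sum>i\<in>S. U i) - (\<Sum>i\<in>S. alpha i / coalition_rate R S) - (beta + gamma) / coalition_rate R S"

definition core :: "nat set \<Rightarrow> (nat set \<Rightarrow> real) \<Rightarrow> (nat \<Rightarrow> real) set" where
  "core Ns v = {x. (\<forall>i. i \<notin> Ns \<longrightarrow> x i = 0) \<and> (\<Sum>i\<in>Ns. x i) = v Ns \<and>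
     (\<forall>S. S \<subseteq> Ns \<and> S \<noteq> {} \<longrightarrow> (\<Sum>i\<in>S. x i) \<ge> v S)}"

end

theory Submission
  imports Defs
begin

theorem theorem6:
  fixes N :: nat and U R PRx :: "nat \<Rightarrow> real"
    and a b w X PTx P :: real
  assumes "N \<ge> 2"
    and "X > 0" and "a > 0" and "b > 0" and "w > 0" and "PTx > 0"
    and "\<forall>i\<in>{1..N}. R i > 0"
    and "\<forall>i\<in>{1..N}. PRx i > 0"
    and "\<forall>i\<in>{1..N}. PRx i = P"
    and "Max (R ` {1..N}) / Min (R ` {1..N}) > 1 + (b * PTx * X + w * X) / (a * P * X)"
  shows "core {1..N} (mc_value U (\<lambda>i. a * PRx i * X) (b * PTx * X) (w * X) R) = {}"
proof (rule ccontr)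
  define A where "A = {1..N}"
  define al where "al = a * P * X"
  define c where "c = b * PTx * X + w * X"
  define v where "v = mc_value U (\<lambda>i. a * PRx i * X) (b * PTx * X) (w * X) R"
  assume "core {1..N} (mc_value U (\<lambda>i. a * PRx i * X) (b * PTx * X) (w * X) R) \<noteq> {}"
  then obtain x where x: "x \<in> core A v" unfolding A_def v_def by blast
  have finA: "finite A" and neA: "A \<noteq> {}" using assms(1) by (auto simp: A_def)
  have P: "P > 0" using assms(8,9) assms(1) by force
  have alp: "al > 0" using P assms(2,3) by (simp add: al_def)
  have cp: "c > 0" using assms(2,4,5,6) by (simp add: c_def add_pos_pos)
  have alpha: "\<And>i. i \<in> A \<Longrightarrow> a * PRx i * X = al" using assms(9) by (simp add: A_def al_def)
  have "Max (R ` A) \<in> R ` A" using finA neA by simp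
  then obtain m where m: "m \<in> A" "R m = Max (R ` A)" by (metis imageE)
  have "Min (R ` A) \<in> R ` A" using finA neA by simp
  then obtain k where k: "k \<in> A" "R k = Min (R ` A)" by (metis imageE)
  define r where "r = R k"
  have rp: "r > 0" using k assms(7) by (simp add: r_def A_def)
  have hyp: "R m / r > 1 + c / al" using assms(10) m k by (simp add: A_def r_def c_def al_def)
  then have "R m / r > 1" using cp alp
    by (smt (verit) divide_pos_pos)
  then have "R m > r" using rp by (simp add: less_divide_eq)
  then have km: "k \<noteq> m" using r_def by auto
  have hyp2: "R m * al > (al + c) * r"
  proof -
    have "R m / r > (al + c) / al" using hyp alp by (simp add: add_divide_distrib)
    then show ?thesis using rp alp by (simp add: divide_less_eq less_divide_eq field_simps)
  qed
  have crA: "coalition_rate R A = r" unfolding coalition_rate_def using k by (simp add: r_def)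
  have crB: "coalition_rate R (A - {m}) = r"
  proof -
    have "Min (R ` (A - {m})) \<ge> Min (R ` A)" using finA km k by (intro Min_antimono) auto
    moreover have "Min (R ` (A - {m})) \<le> R k" using finA km k by (metis DiffI Min_le finite_Diff finite_imageI image_eqI singletonD)
    ultimately show ?thesis unfolding coalition_rate_def using k r_def by simp
  qed
  have crm: "coalition_rate R {m} = R m" unfolding coalition_rate_def by simp
  have Rmp: "R m > 0" using `R m > r` rp by simp
  have ne2: "A - {m} \<noteq> {}" using km k by auto
  from x have c1: "sum x A = v A" and c2: "sum x {m} \<ge> v {m}" and c3: "sum x (A - {m}) \<ge> v (A - {m})"
    unfolding core_def using m ne2 by auto
  have sA: "sum x A = x m + sum x (A - {m})" using finA m by (simp add: sum.remove)
  have vA0: "v A = (\<Sum>i\<in>A. U i) - (\<Sum>i\<in>A. al / r) - c / r"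
    unfolding v_def mc_value_def crA using alpha
    by (simp add: c_def)
  have vA: "v A = U m + (\<Sum>i\<in>A-{m}. U i) - (al / r + (\<Sum>i\<in>A-{m}. al / r)) - c / r"
    unfolding vA0 using finA m sum.remove[OF finA m(1), of U] sum.remove[OF finA m(1), of "\<lambda>i. al / r"]
    by simp
  have vB: "v (A - {m}) = (\<Sum>i\<in>A-{m}. U i) - (\<Sum>i\<in>A-{m}. al / r) - c / r"
    unfolding v_def mc_value_def crB using finA m alpha
    by (simp add: c_def)
  have vm: "v {m} = U m - al / R m - c / R m"
    unfolding v_def mc_value_def crm using m alpha by (simp add: c_def)
  have "al / r \<le> al / R m + c / R m" using c1 c2 c3 sA vA vB vm by simp
  then have "al / r \<le> (al + c) / R m" by (simp add: add_divide_distrib)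
  then have "al * R m \<le> (al + c) * r" using rp Rmp by (simp add: divide_le_eq le_divide_eq field_simps)
  then show False using hyp2 by (simp add: mult.commute)
qed

end
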